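(* Let $W$ be a nonzero restricted $\widehat{\mathfrak h}$-module satisfying condition $\mathcal C_0$. Then $\Omega_W\neq0$, i.e. $W$ contains a vacuum vector.
   Context: Let $p$ be a prime and $\mathbb{F}$ a field of characteristic $p$. Integers are viewed as elements of the prime subfield of $\mathbb{F}$. We write $\mathbb{Z}_+$ for the positive integers. <b>Heisenberg setup.</b> Let $\mathfrak h$ be a finite-dimensional $\mathbb{F}$-vector space with a non-degenerate symmetric bilinear form $\langle\cdot,\cdot\rangle$. The affine Lie algebra is $\widehat{\mathfrak h}=\mathfrak h\otimes\mathbb{F}[t,t^{-1}]\oplus\mathbb{F}\mathbf k$, where $\mathbf k$ is central and, writing $u(m)=u\otimes t^m$, $$[u(m),v(n)]=m\,\delta_{m+n,0}\langle u,v\rangle\mathbf k.$$ Set $\widehat{\mathfrak h}_+=\bigoplus_{n>0}\mathfrak h\otimes t^{-n}$ and $\widehat{\mathfrak h}_-=\bigoplus_{n>0}\mathfrak h\otimes t^{n}$. For a linear functional $\lambda\in(\widehat{\mathfrak h}_+)^*$, write $\lambda_n(u)=\lambda(u(-n))$ for $u\in\mathfrak h$, $n\in\mathbb{Z}_+$. <b>Restricted modules and vacuum vectors.</b> An $\widehat{\mathfrak h}$-module $W$ is restricted if for all $u\in\mathfrak h$ and $w\in W$ we have $u(n)w=0$ for $n\gg0$. Set $\Omega_W=\{w\in W:\widehat{\mathfrak h}_-w=0\}$; its nonzero elements are called vacuum vectors. <b>Condition $\mathcal C_0$.</b> A restricted $\widehat{\mathfrak h}$-module $W$ satisfies condition $\mathcal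 C_0$ if both of the following hold. <ol> <li>For all $u\in\mathfrak h$ and $n\in\mathbb{Z}_+$, the operators $u(np)$ and $u(n)^p$ act as $0$ on $W$.</li> <li>The operators $u(-np)$ and $u(-n)^p$ ($u\in\mathfrak h$, $n\ge0$) act semisimply and simultaneously. Precisely, $$W=\bigoplus_{(\lambda_0,\lambda)\in\mathfrak h^*\times(\widehat{\mathfrak h}_+)^*}W_{\lambda_0,\lambda},$$ where $W_{\lambda_0,\lambda}$ is the set of $w\in W$ such that: <ul> <li>$u(0)w=\lambda_0(u)w$ for all $u\in\mathfrak h$;</li> <li>$u(-m)w=\lambda_m(u)w$ for all $u\in\mathfrak h$, $m\in p\mathbb{Z}_+$;</li> <li>$u(-n)^pw=\lambda_n(u)^pw$ for all $u\in\mathfrak h$, $n\in\mathbb{Z}_+$.</li> </ul></li> </ol> *)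

theory Defs
  imports Complex_Main "HOL-Computational_Algebra.Primes"
begin

definition form_space ::
  "('f::field \<Rightarrow> 'h::ab_group_add \<Rightarrow> 'h) \<Rightarrow> ('h \<Rightarrow> 'h \<Rightarrow> 'f) \<Rightarrow> bool" where
  "form_space sH bf \<longleftrightarrow>
     vector_space sH \<and>
     (\<exists>B. finite B \<and> module.span sH B = UNIV) \<and>
     (\<forall>u. Vector_Spaces.linear sH (*) (bf u)) \<and>
     (\<forall>u v. bf u v = bf v u) \<and>
     (\<forall>u. (\<forall>v. bf u v = 0) \<longrightarrow> u = 0)"

text \<open>A module W (F-space with scalar multiplication sW) for the affine Lie algebra
 hat h: act u m is the action of u(m) = u \<otimes> t^m, kact the action of the central k.\<close>
definition affine_heis_module ::
  "('f::field \<Rightarrow> 'h::ab_group_add \<Rightarrow> 'h) \<Rightarrow> ('h \<Rightarrow> 'h \<Rightarrow> 'f) \<Rightarrow>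
   ('f \<Rightarrow> 'w::ab_group_add \<Rightarrow> 'w) \<Rightarrow> ('h \<Rightarrow> int \<Rightarrow> 'w \<Rightarrow> 'w) \<Rightarrow> ('w \<Rightarrow> 'w) \<Rightarrow> bool" where
  "affine_heis_module sH bf sW act kact \<longleftrightarrow>
     vector_space sW \<and>
     (\<forall>u m. Vector_Spaces.linear sW sW (act u m)) \<and>
     Vector_Spaces.linear sW sW kact \<and>
     (\<forall>u v m w. act (u + v) m w = act u m w + act v m w) \<and>
     (\<forall>c u m w. act (sH c u) m w = sW c (act u m w)) \<and>
     (\<forall>u v m n w. act u m (act v n w) - act v n (act u m w) =
         sW (if m + n = 0 then of_int m * bf u v else 0) (kact w)) \<and>
     (\<forall>u m w. kact (act u m w) = act u m (kact w))"

definition restricted_mod :: "('h \<Rightarrow> int \<Rightarrow> 'w \<Rightarrow> 'w::zero) \<Rightarrow> bool" where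
  "restricted_mod act \<longleftrightarrow> (\<forall>u w. \<exists>N. \<forall>n\<ge>N. act u n w = 0)"

definition vacuum_space :: "('h \<Rightarrow> int \<Rightarrow> 'w \<Rightarrow> 'w::zero) \<Rightarrow> 'w set" where
  "vacuum_space act = {w. \<forall>u n. n > 0 \<longrightarrow> act u n w = 0}"

text \<open>Weight space W_{lambda_0,lambda}; a weight is encoded as mu :: nat => h => F with
 mu 0 = lambda_0 and mu n = lambda_n (n > 0).\<close>
definition weight_space ::
  "nat \<Rightarrow> ('f \<Rightarrow> 'w \<Rightarrow> 'w) \<Rightarrow> ('h \<Rightarrow> int \<Rightarrow> 'w \<Rightarrow> 'w) \<Rightarrow> (nat \<Rightarrow> 'h \<Rightarrow> 'f::field) \<Rightarrow> 'w set" where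
  "weight_space p sW act mu = {w.
     (\<forall>u. act u 0 w = sW (mu 0 u) w) \<and>
     (\<forall>u m. m > 0 \<and> p dvd m \<longrightarrow> act u (- int m) w = sW (mu m u) w) \<and>
     (\<forall>u n. n > 0 \<longrightarrow> (act u (- int n) ^^ p) w = sW (mu n u ^ p) w)}"

definition weights :: "('f::field \<Rightarrow> 'h::ab_group_add \<Rightarrow> 'h) \<Rightarrow> (nat \<Rightarrow> 'h \<Rightarrow> 'f) set" where
  "weights sH = {mu. \<forall>n. Vector_Spaces.linear sH (*) (mu n)}"

definition condition_C0 ::
  "nat \<Rightarrow> ('f::field \<Rightarrow> 'h::ab_group_add \<Rightarrow> 'h) \<Rightarrow> ('f \<Rightarrow> 'w::ab_group_add \<Rightarrow> 'w) \<Rightarrow> ('h \<Rightarrow> int \<Rightarrow> 'w \<Rightarrow> 'w) \<Rightarrow> bool" where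
  "condition_C0 p sH sW act \<longleftrightarrow>
     (\<forall>u n w. n > 0 \<longrightarrow> act u (int (n * p)) w = 0 \<and> (act u (int n) ^^ p) w = 0) \<and>
     (\<forall>w. \<exists>S f. finite S \<and> S \<subseteq> weights sH \<and>
            (\<forall>mu\<in>S. f mu \<in> weight_space p sW act mu) \<and> w = sum f S) \<and>
     (\<forall>S f. finite S \<and> S \<subseteq> weights sH \<and>
            (\<forall>mu\<in>S. f mu \<in> weight_space p sW act mu) \<and> sum f S = 0 \<longrightarrow>
            (\<forall>mu\<in>S. f mu = 0))"

end

theory Submission
  imports Defs
begin

lemma kill_all_aux:
  fixes G :: "('w::zero \<Rightarrow> 'w) set"
  assumes pres: "\<And>f x. f \<in> G \<Longrightarrow> P x \<Longrightarrow> P (f x)"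
  and comm: "\<And>f g x. f \<in> G \<Longrightarrow> g \<in> G \<Longrightarrow> g x = 0 \<Longrightarrow> g (f x) = 0"
  and nil: "\<And>f x. f \<in> G \<Longrightarrow> (f ^^ p) x = 0"
  shows "finite F \<Longrightarrow> F \<subseteq> G \<Longrightarrow> w \<noteq> 0 \<Longrightarrow> P w \<Longrightarrow> \<exists>v. v \<noteq> 0 \<and> P v \<and> (\<forall>f\<in>F. f v = 0)"
proof (induction F arbitrary: w rule: finite_induct)
  case empty
  then show ?case by blast
next
  case (insert f F)
  then obtain v where v: "v \<noteq> 0" "P v" "\<forall>g\<in>F. g v = 0" by blast
  have fG: "f \<in> G" using insert by blast
  have ex: "\<exists>k. (f ^^ k) v \<noteq> 0 \<and> f ((f ^^ k) v) = 0"
  proof (rule ccontr)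
    assume a: "\<not> ?thesis"
    have "(f ^^ k) v \<noteq> 0" for k
      by (induction k) (use v a in auto)
    with nil[OF fG] show False by blast
  qed
  then obtain k where k: "(f ^^ k) v \<noteq> 0" "f ((f ^^ k) v) = 0" by blast
  have "P ((f ^^ k) v)" by (induction k) (use v pres[OF fG] in auto)
  moreover have "\<forall>g\<in>F. g ((f ^^ k) v) = 0"
  proof
    fix g assume g: "g \<in> F"
    then have gG: "g \<in> G" using insert by blast
    show "g ((f ^^ k) v) = 0" by (induction k) (use v g comm[OF fG gG] in auto)
  qed
  ultimately show ?case using k by blast
qed

theorem lemma4:
  fixes p :: nat
    and sH :: "'f::field \<Rightarrow> 'h::ab_group_add \<Rightarrow> 'h"
    and bf :: "'h \<Rightarrow> 'h \<Rightarrow> 'f"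
    and sW :: "'f \<Rightarrow> 'w::ab_group_add \<Rightarrow> 'w"
    and act :: "'h \<Rightarrow> int \<Rightarrow> 'w \<Rightarrow> 'w"
    and kact :: "'w \<Rightarrow> 'w"
  assumes "prime p" and "CHAR('f) = p"
    and "form_space sH bf"
    and "affine_heis_module sH bf sW act kact"
    and "restricted_mod act"
    and "condition_C0 p sH sW act"
    and "\<exists>w::'w. w \<noteq> 0"
  shows "\<exists>w \<in> vacuum_space act. w \<noteq> 0"
proof -
  have vsH: "vector_space sH" using assms(3) unfolding form_space_def by blast
  then interpret H: vector_space sH .
  obtain B where B: "finite B" "H.span B = UNIV" using assms(3) unfolding form_space_def by blast
  have vsW: "vector_space sW" using assms(4) unfolding affine_heis_module_def by blast
  then interpret W: vector_space sW .
  have lin: "\<And>u m. Vector_Spaces.linear sW sW (act u m)" using assms(4) unfolding affine_heis_module_def by blast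
  have act0: "act u m 0 = 0" for u m using lin[of u m] by (rule vector_space_pair.linear_0[OF vector_space_pair.intro[OF vsW vsW]])
  have addu: "\<And>u v m w. act (u + v) m w = act u m w + act v m w"
    and scu: "\<And>c u m w. act (sH c u) m w = sW c (act u m w)"
    and br: "\<And>u v m n w. act u m (act v n w) - act v n (act u m w) =
         sW (if m + n = 0 then of_int m * bf u v else 0) (kact w)"
    using assms(4) unfolding affine_heis_module_def by blast+
  have commute: "act u m (act v n w) = act v n (act u m w)" if "m > 0" "n > 0" for u v m n w
    using br[of u m v n w] that by simp
  have span0: "act u n v = 0" if "\<forall>b\<in>B. act b n v = 0" for u n v
  proof -
    have "u \<in> H.span B" using B by simp
    then show ?thesis
    proof (induction rule: H.span_induct_alt)
      case base
      have "act 0 n v = act 0 n v + act 0 n v" using addu[of 0 0 n v] by simp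
      then show ?case by simp
    next
      case (step c x y)
      then show ?case using addu scu that by simp
    qed
  qed
  obtain w :: 'w where w: "w \<noteq> 0" using assms(7) by blast
  have "\<forall>b. \<exists>N. \<forall>n\<ge>N. act b n w = 0" using assms(5) unfolding restricted_mod_def by blast
  then obtain Nf where Nf: "\<And>b n. n \<ge> Nf b \<Longrightarrow> act b n w = 0" by metis
  define N where "N = (\<Sum>b\<in>B. \<bar>Nf b\<bar>)"
  have NB: "Nf b \<le> N" if "b \<in> B" for b
  proof -
    have "\<bar>Nf b\<bar> \<le> N" unfolding N_def by (rule member_le_sum) (use that B in auto)
    then show ?thesis by simp
  qed
  define P where "P x = (\<forall>u n. n \<ge> N \<longrightarrow> act u n x = 0)" for x
  have Pw: "P w" unfolding P_def
  proof (intro allI impI)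
    fix u n assume "N \<le> n"
    then have "\<forall>b\<in>B. act b n w = 0" using NB Nf by force
    then show "act u n w = 0" by (rule span0)
  qed
  define G where "G = (\<lambda>(b, n). act b n) ` (B \<times> {1..<N})"
  have Gpos: "\<exists>b n. f = act b n \<and> n > 0" if "f \<in> G" for f
    using that unfolding G_def by fastforce
  have N0: "N \<ge> 0" unfolding N_def by (simp add: sum_nonneg)
  have pres: "\<And>f x. f \<in> G \<Longrightarrow> P x \<Longrightarrow> P (f x)"
  proof -
    fix f x assume "f \<in> G" "P x"
    then obtain b m where f: "f = act b m" "m > 0" using Gpos by blast
    show "P (f x)" unfolding P_def
    proof (intro allI impI)
      fix u n assume n: "N \<le> n"
      then have "n > 0" using f N0 \<open>f \<in> G\<close> unfolding G_def by auto
      then have "act u n (act b m x) = act b m (act u n x)" using commute f by blast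
      also have "\<dots> = 0" using \<open>P x\<close> n act0 unfolding P_def by simp
      finally show "act u n (f x) = 0" using f by simp
    qed
  qed
  have comm: "\<And>f g x. f \<in> G \<Longrightarrow> g \<in> G \<Longrightarrow> g x = 0 \<Longrightarrow> g (f x) = 0"
  proof -
    fix f g x assume a: "f \<in> G" "g \<in> G" "g x = 0"
    obtain b m where f: "f = act b m" "m > 0" using Gpos a by blast
    obtain c n where g: "g = act c n" "n > 0" using Gpos a by blast
    have "g (f x) = f (g x)" using commute f g by blast
    then show "g (f x) = 0" using a act0 f by simp
  qed
  have nil: "\<And>f x. f \<in> G \<Longrightarrow> (f ^^ p) x = 0"
  proof -
    fix f x assume "f \<in> G"
    then obtain b m where f0: "f = act b m" "m > 0" using Gpos by blast
    then obtain n where f: "f = act b (int n)" "n > 0"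
    proof (intro that[of "nat m"])
      show "f = act b (int (nat m))" using f0 by simp
      show "nat m > 0" using f0 by simp
    qed
    then show "(f ^^ p) x = 0" using assms(6) unfolding condition_C0_def by blast
  qed
  have "finite G" unfolding G_def using B by simp
  have "\<exists>v. v \<noteq> 0 \<and> P v \<and> (\<forall>f\<in>G. f v = 0)"
    by (rule kill_all_aux[of G P p G w]) (fact pres, fact comm, fact nil, fact, simp, fact w, fact Pw)
  then obtain v where v: "v \<noteq> 0" "P v" "\<forall>f\<in>G. f v = 0" by blast
  have "v \<in> vacuum_space act" unfolding vacuum_space_def
  proof (intro CollectI allI impI)
    fix u n assume n: "(0::int) < n"
    show "act u n v = 0"
    proof (cases "n \<ge> N")
      case True then show ?thesis using v unfolding P_def by blast
    next
      case False
      have "\<forall>b\<in>B. act b n v = 0"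
      proof
        fix b assume "b \<in> B"
        then have "act b n \<in> G" unfolding G_def using False n by force
        then show "act b n v = 0" using v by blast
      qed
      then show ?thesis by (rule span0)
    qed
  qed
  then show ?thesis using v by blast
qed

end
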